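(* Let $(X,x)$ be a pointed diffeological space and let $A$ be a $D$-open subset of $X$ containing $x$, equipped with the sub-diffeology of $X$. Then the inclusion $A\hookrightarrow X$ induces an isomorphism $\hat{T}_x(A)\cong\hat{T}_x(X)$.
   Context: A diffeological space is a set $X$ together with, for every open subset $U$ of every $\mathbb{R}^n$, a set of functions $U\to X$ called plots, such that constant maps are plots, the composite of a plot with a smooth map between open subsets of Euclidean spaces is a plot, and a function which is locally a plot is a plot; smooth maps send plots to plots. A subset of $X$ is $D$-open if its preimage under every plot is open; the sub-diffeology on a subset consists of maps whose composite with the inclusion is a plot. For a diffeological space $B$, $C^\infty(B,\mathbb{R})$ carries the functional diffeology (a map $U\to C^\infty(B,\mathbb{R})$ is a plot iff its adjoint $U\times B\to\mathbb{R}$ is smooth). $G_x(X)=\operatorname{colim}_B C^\infty(B,\mathbb{R})$ (colimit in diffeological spaces over $D$-open $B\ni x$ with sub-diffeology, along restrictions) is the diffeological algebra of germs at $x$. The external tangent space $\hat{T}_x(X)$ is the vector space of smooth linear maps $F:G_x(X)\to\mathbb{R}$ with $F([f][g])=F([f])g(x)+f(x)F([g])$. A smooth pointed map $h:(X,x)\to(Y,y)$ induces $h_*:\hat T_x(X)\to\hat T_y(Y)$, $h_*(F)([g])=F([g\circ h])$. *)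

theory Defs
  imports "HOL-Analysis.Analysis"
begin

text \<open>Euclidean space R^n is represented as the set of real sequences vanishing from
  index n on, with the (product) topology of nat => real, which restricts to the usual
  topology on this set.\<close>

definition Eucl :: "nat \<Rightarrow> (nat \<Rightarrow> real) set" where
  "Eucl n = {v. \<forall>i\<ge>n. v i = 0}"

definition open_dom :: "nat \<Rightarrow> (nat \<Rightarrow> real) set \<Rightarrow> bool" where
  "open_dom n U \<longleftrightarrow> U \<subseteq> Eucl n \<and> openin (top_of_set (Eucl n)) U"

fun Ck :: "nat \<Rightarrow> nat \<Rightarrow> (nat \<Rightarrow> real) set \<Rightarrow> ((nat \<Rightarrow> real) \<Rightarrow> real) \<Rightarrow> bool" where
  "Ck n 0 U f = continuous_on U f"
| "Ck n (Suc k) U f = (continuous_on U f \<and>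
     (\<forall>i<n. \<exists>g. (\<forall>v\<in>U. ((\<lambda>t. f (v(i := v i + t))) has_real_derivative g v) (at 0))
                 \<and> Ck n k U g))"

definition smooth_fun :: "nat \<Rightarrow> (nat \<Rightarrow> real) set \<Rightarrow> ((nat \<Rightarrow> real) \<Rightarrow> real) \<Rightarrow> bool" where
  "smooth_fun n U f \<longleftrightarrow> (\<forall>k. Ck n k U f)"

definition smooth_map :: "nat \<Rightarrow> nat \<Rightarrow> (nat \<Rightarrow> real) set \<Rightarrow> (nat \<Rightarrow> real) set
    \<Rightarrow> ((nat \<Rightarrow> real) \<Rightarrow> (nat \<Rightarrow> real)) \<Rightarrow> bool" where
  "smooth_map m n V U q \<longleftrightarrow> q ` V \<subseteq> U \<and> U \<subseteq> Eucl n \<and> (\<forall>j<n. smooth_fun m V (\<lambda>v. q v j))"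

type_synonym 'a plots = "nat \<Rightarrow> (nat \<Rightarrow> real) set \<Rightarrow> ((nat \<Rightarrow> real) \<Rightarrow> 'a) \<Rightarrow> bool"

text \<open>D n U p: p restricted to U is a plot U -> X (U open in R^n). Plots are
  identified with their restriction to U (extensionality axiom).\<close>
definition diffeology :: "'a set \<Rightarrow> 'a plots \<Rightarrow> bool" where
  "diffeology X D \<longleftrightarrow>
     (\<forall>n U p. D n U p \<longrightarrow> open_dom n U \<and> p ` U \<subseteq> X) \<and>
     (\<forall>n U p q. D n U p \<and> (\<forall>u\<in>U. q u = p u) \<longrightarrow> D n U q) \<and>
     (\<forall>n U c. open_dom n U \<and> c \<in> X \<longrightarrow> D n U (\<lambda>_. c)) \<and>
     (\<forall>n m U V p f. D m V p \<and> open_dom n U \<and> smooth_map n m U V f \<longrightarrow> D n U (p \<circ> f)) \<and>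
     (\<forall>n U p. open_dom n U \<and> p ` U \<subseteq> X \<and>
        (\<forall>u\<in>U. \<exists>W. open_dom n W \<and> u \<in> W \<and> W \<subseteq> U \<and> D n W p) \<longrightarrow> D n U p)"

definition D_open :: "'a set \<Rightarrow> 'a plots \<Rightarrow> 'a set \<Rightarrow> bool" where
  "D_open X D A \<longleftrightarrow> A \<subseteq> X \<and> (\<forall>n U p. D n U p \<longrightarrow> openin (top_of_set U) (U \<inter> p -` A))"

definition sub_diffeology :: "'a plots \<Rightarrow> 'a set \<Rightarrow> 'a plots" where
  "sub_diffeology D A = (\<lambda>n U p. D n U p \<and> p ` U \<subseteq> A)"

definition smooth_on :: "'a plots \<Rightarrow> 'a set \<Rightarrow> ('a \<Rightarrow> real) \<Rightarrow> bool" where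
  "smooth_on D B f \<longleftrightarrow> (\<forall>n U p. D n U p \<and> p ` U \<subseteq> B \<longrightarrow> smooth_fun n U (f \<circ> p))"

definition Cinf :: "'a plots \<Rightarrow> 'a set \<Rightarrow> ('a \<Rightarrow> real) set" where
  "Cinf D B = {f \<in> extensional B. smooth_on D B f}"

text \<open>functional diffeology: the adjoint U x B -> R is smooth (product diffeology)\<close>
definition Cinf_plot :: "'a plots \<Rightarrow> 'a set \<Rightarrow> nat \<Rightarrow> (nat \<Rightarrow> real) set
    \<Rightarrow> ((nat \<Rightarrow> real) \<Rightarrow> 'a \<Rightarrow> real) \<Rightarrow> bool" where
  "Cinf_plot D B n U P \<longleftrightarrow> open_dom n U \<and> P ` U \<subseteq> Cinf D B \<and>
     (\<forall>m V q r. open_dom m V \<and> smooth_map m n V U q \<and> D m V r \<and> r ` V \<subseteq> B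
        \<longrightarrow> smooth_fun m V (\<lambda>v. P (q v) (r v)))"

definition germ :: "'a set \<Rightarrow> 'a plots \<Rightarrow> 'a \<Rightarrow> 'a set \<Rightarrow> ('a \<Rightarrow> real)
    \<Rightarrow> ('a set \<times> ('a \<Rightarrow> real)) set" where
  "germ X D x B f = {(B', g). D_open X D B' \<and> x \<in> B' \<and> g \<in> Cinf D B' \<and>
     (\<exists>B''. D_open X D B'' \<and> x \<in> B'' \<and> B'' \<subseteq> B \<inter> B' \<and> (\<forall>y\<in>B''. f y = g y))}"

definition germs :: "'a set \<Rightarrow> 'a plots \<Rightarrow> 'a \<Rightarrow> ('a set \<times> ('a \<Rightarrow> real)) set set" where
  "germs X D x = {germ X D x B f | B f. D_open X D B \<and> x \<in> B \<and> f \<in> Cinf D B}"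

text \<open>colimit (final) diffeology on the germs\<close>
definition germ_plot :: "'a set \<Rightarrow> 'a plots \<Rightarrow> 'a \<Rightarrow> nat \<Rightarrow> (nat \<Rightarrow> real) set
    \<Rightarrow> ((nat \<Rightarrow> real) \<Rightarrow> ('a set \<times> ('a \<Rightarrow> real)) set) \<Rightarrow> bool" where
  "germ_plot X D x n U P \<longleftrightarrow> open_dom n U \<and> P ` U \<subseteq> germs X D x \<and>
     (\<forall>u\<in>U. \<exists>W B Q. open_dom n W \<and> u \<in> W \<and> W \<subseteq> U \<and> D_open X D B \<and> x \<in> B \<and>
        Cinf_plot D B n W Q \<and> (\<forall>w\<in>W. P w = germ X D x B (Q w)))"

text \<open>external tangent space: smooth linear derivations G_x(X) -> R
  (functions set to 0 outside G_x(X)); the algebra operations on germs are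
  computed on representatives over a common D-open domain.\<close>
definition ext_tangent :: "'a set \<Rightarrow> 'a plots \<Rightarrow> 'a
    \<Rightarrow> (('a set \<times> ('a \<Rightarrow> real)) set \<Rightarrow> real) set" where
  "ext_tangent X D x = {F.
     (\<forall>\<gamma>. \<gamma> \<notin> germs X D x \<longrightarrow> F \<gamma> = 0) \<and>
     (\<forall>n U P. germ_plot X D x n U P \<longrightarrow> smooth_fun n U (F \<circ> P)) \<and>
     (\<forall>B f g a b. D_open X D B \<and> x \<in> B \<and> f \<in> Cinf D B \<and> g \<in> Cinf D B \<longrightarrow>
        F (germ X D x B (\<lambda>y. a * f y + b * g y))
          = a * F (germ X D x B f) + b * F (germ X D x B g) \<and>
        F (germ X D x B (\<lambda>y. f y * g y))
          = F (germ X D x B f) * g x + f x * F (germ X D x B g))}"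

text \<open>h_*(F)([g]) = F([g o h]), g represented by any element of the germ class\<close>
definition pushfwd :: "'a set \<Rightarrow> 'a plots \<Rightarrow> 'a \<Rightarrow> 'b set \<Rightarrow> 'b plots \<Rightarrow> ('a \<Rightarrow> 'b)
    \<Rightarrow> (('a set \<times> ('a \<Rightarrow> real)) set \<Rightarrow> real)
    \<Rightarrow> (('b set \<times> ('b \<Rightarrow> real)) set \<Rightarrow> real)" where
  "pushfwd X D x Y E h F = (\<lambda>\<gamma>. if \<gamma> \<in> germs Y E (h x)
      then (case SOME p. p \<in> \<gamma> of (B, g) \<Rightarrow> F (germ X D x (X \<inter> h -` B) (g \<circ> h)))
      else 0)"

end

theory Submission
  imports Defs
begin



lemma upd_cont: "continuous_on UNIV (\<lambda>t::real. v(i := v i + t))"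
  apply (rule continuous_on_coordinatewise_then_product)
  subgoal for k by (cases "k = i") (simp_all add: continuous_on_add continuous_on_const continuous_on_id)
  done

lemma upd_ev:
  assumes "open_dom n U" "v \<in> U" "i < n"
  shows "eventually (\<lambda>t::real. v(i := v i + t) \<in> U) (at 0)"
proof -
  from assms(1) obtain Ob where Ob: "open Ob" "U = Eucl n \<inter> Ob"
    using openin_open[of "Eucl n" U] unfolding open_dom_def by blast
  have "isCont (\<lambda>t::real. v(i := v i + t)) 0"
    using upd_cont[of v i] by (simp add: continuous_on_eq_continuous_at)
  hence "((\<lambda>t::real. v(i := v i + t)) \<longlongrightarrow> v) (at 0)"
    by (simp add: isCont_def)
  hence "eventually (\<lambda>t::real. v(i := v i + t) \<in> Ob) (at 0)"
    using Ob assms(2) by (intro topological_tendstoD) auto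
  moreover have "v(i := v i + t) \<in> Eucl n" for t
    using assms Ob by (auto simp: Eucl_def)
  ultimately show ?thesis using Ob(2) by (rule_tac eventually_mono) auto
qed

lemma Ck_cong:
  assumes "open_dom n U" "\<forall>u\<in>U. f u = g u" "Ck n k U f"
  shows "Ck n k U g"
  using assms(2,3)
proof (induction k arbitrary: f g)
  case 0 thus ?case using continuous_on_cong by auto
next
  case (Suc k)
  have c: "continuous_on U g" using Suc.prems continuous_on_cong by auto
  show ?case
  proof (simp add: c, intro allI impI)
    fix i assume i: "i < n"
    from Suc.prems i obtain h where h: "\<forall>v\<in>U. ((\<lambda>t. f (v(i := v i + t))) has_real_derivative h v) (at 0)" "Ck n k U h"
      by auto
    have "\<forall>v\<in>U. ((\<lambda>t. g (v(i := v i + t))) has_real_derivative h v) (at 0)"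
    proof
      fix v assume v: "v \<in> U"
      have ev: "eventually (\<lambda>t. f (v(i := v i + t)) = g (v(i := v i + t))) (at 0)"
        using upd_ev[OF assms(1) v i] Suc.prems by (auto elim: eventually_mono)
      have "f (v(i := v i + 0)) = g (v(i := v i + 0))" using v Suc.prems by simp
      thus "((\<lambda>t. g (v(i := v i + t))) has_real_derivative h v) (at 0)"
        using h(1) v has_field_derivative_cong_eventually[OF ev] by auto
    qed
    thus "\<exists>h. (\<forall>v\<in>U. ((\<lambda>t. g (v(i := v i + t))) has_real_derivative h v) (at 0)) \<and> Ck n k U h"
      using h(2) by blast
  qed
qed


lemma Ck_const: "Ck n k U (\<lambda>_. c)"
proof (induction k arbitrary: c)
  case 0 show ?case by simp
next
  case (Suc k)
  have "\<forall>v\<in>U. ((\<lambda>t. c) has_real_derivative (\<lambda>_. 0) v) (at 0)" by simp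
  hence "\<exists>g. (\<forall>v\<in>U. ((\<lambda>t. c) has_real_derivative g v) (at 0)) \<and> Ck n k U g"
    using Suc.IH[of 0] by (intro exI[of _ "\<lambda>_. 0"]) simp
  thus ?case by simp
qed


lemma Ck_proj: "Ck n k U (\<lambda>v. v j)"
proof (cases k)
  case 0 thus ?thesis
    by (auto intro: continuous_on_subset[OF continuous_on_product_coordinates])
next
  case (Suc k')
  have d: "((\<lambda>t. (v(i := v i + t)) j) has_real_derivative (if i = j then 1 else 0)) (at 0)" for v i
    by (cases "i = j") (auto intro!: derivative_eq_intros)
  have "\<exists>g. (\<forall>v\<in>U. ((\<lambda>t. (v(i := v i + t)) j) has_real_derivative g v) (at 0)) \<and> Ck n k' U g" for i
    apply (rule exI[of _ "\<lambda>_. if i = j then 1 else 0"])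
    using d[of _ i] Ck_const[of n k' U "if i = j then 1 else 0"] by blast
  thus ?thesis using Suc
    by (simp add: continuous_on_subset[OF continuous_on_product_coordinates])
qed




lemma smooth_fun_cong:
  "open_dom n U \<Longrightarrow> \<forall>u\<in>U. f u = g u \<Longrightarrow> smooth_fun n U f \<Longrightarrow> smooth_fun n U g"
  unfolding smooth_fun_def using Ck_cong by blast

lemma Dopen_Int:
  assumes "D_open Y E B1" "D_open Y E B2" shows "D_open Y E (B1 \<inter> B2)"
  unfolding D_open_def
proof (intro conjI allI impI)
  show "B1 \<inter> B2 \<subseteq> Y" using assms unfolding D_open_def by blast
  fix n U p assume "E n U p"
  hence "openin (top_of_set U) (U \<inter> p -` B1)" "openin (top_of_set U) (U \<inter> p -` B2)"
    using assms unfolding D_open_def by blast+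
  hence "openin (top_of_set U) ((U \<inter> p -` B1) \<inter> (U \<inter> p -` B2))" by (rule openin_Int)
  moreover have "(U \<inter> p -` B1) \<inter> (U \<inter> p -` B2) = U \<inter> p -` (B1 \<inter> B2)" by blast
  ultimately show "openin (top_of_set U) (U \<inter> p -` (B1 \<inter> B2))" by simp
qed

lemma germ_cong_sub:
  assumes "D_open Y E C" "x \<in> C" "C \<subseteq> B" "C \<subseteq> B'" "\<forall>y\<in>C. h y = h' y"
  shows "germ Y E x B h \<subseteq> germ Y E x B' h'"
proof
  fix p assume "p \<in> germ Y E x B h"
  then obtain B1 g B'' where p: "p = (B1, g)" "D_open Y E B1" "x \<in> B1" "g \<in> Cinf E B1"
    "D_open Y E B''" "x \<in> B''" "B'' \<subseteq> B \<inter> B1" "\<forall>y\<in>B''. h y = g y"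
    unfolding germ_def by blast
  have "D_open Y E (C \<inter> B'')" using Dopen_Int assms(1) p(5) by blast
  moreover have "C \<inter> B'' \<subseteq> B' \<inter> B1" "x \<in> C \<inter> B''" "\<forall>y\<in>C \<inter> B''. h' y = g y"
    using assms p by auto
  ultimately show "p \<in> germ Y E x B' h'" using p unfolding germ_def by blast
qed

lemma germ_cong:
  assumes "D_open Y E C" "x \<in> C" "C \<subseteq> B" "C \<subseteq> B'" "\<forall>y\<in>C. h y = h' y"
  shows "germ Y E x B h = germ Y E x B' h'"
  using germ_cong_sub[OF assms] germ_cong_sub[of Y E C x B' B h' h] assms by auto

lemma germ_self:
  "D_open Y E B \<Longrightarrow> x \<in> B \<Longrightarrow> f \<in> Cinf E B \<Longrightarrow> (B, f) \<in> germ Y E x B f"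
  unfolding germ_def by blast

lemma germ_memD:
  assumes "(B1, g) \<in> germ Y E x B h"
  shows "D_open Y E B1 \<and> x \<in> B1 \<and> g \<in> Cinf E B1 \<and> germ Y E x B h = germ Y E x B1 g
     \<and> (\<exists>C. D_open Y E C \<and> x \<in> C \<and> C \<subseteq> B \<inter> B1 \<and> (\<forall>y\<in>C. h y = g y))"
proof -
  from assms obtain C where C: "D_open Y E B1" "x \<in> B1" "g \<in> Cinf E B1"
    "D_open Y E C" "x \<in> C" "C \<subseteq> B \<inter> B1" "\<forall>y\<in>C. h y = g y"
    unfolding germ_def by blast
  have "germ Y E x B h = germ Y E x B1 g" using germ_cong[OF C(4,5)] C(6,7) by auto
  thus ?thesis using C by blast
qed

lemma germs_D:
  assumes "\<gamma> \<in> germs Y E x"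
  obtains B f where "\<gamma> = germ Y E x B f" "D_open Y E B" "x \<in> B" "f \<in> Cinf E B"
  using assms unfolding germs_def by blast

lemma germs_some:
  assumes "\<gamma> \<in> germs Y E x"
  shows "(SOME p. p \<in> \<gamma>) \<in> \<gamma>"
proof -
  from assms obtain B f where "\<gamma> = germ Y E x B f" "D_open Y E B" "x \<in> B" "f \<in> Cinf E B"
    by (rule germs_D)
  hence "(B, f) \<in> \<gamma>" using germ_self[of Y E B x f] by simp
  thus ?thesis by (rule someI)
qed

lemma empty_not_germ: "{} \<notin> germs Y E x"
proof
  assume "{} \<in> germs Y E x"
  then obtain B f where "{} = germ Y E x B f" "D_open Y E B" "x \<in> B" "f \<in> Cinf E B"
    by (rule germs_D)
  thus False using germ_self[of Y E B x f] by simp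
qed

lemma ext_empty: "F \<in> ext_tangent Y E x \<Longrightarrow> F {} = 0"
proof -
  assume "F \<in> ext_tangent Y E x"
  hence "\<forall>\<gamma>. \<gamma> \<notin> germs Y E x \<longrightarrow> F \<gamma> = 0" unfolding ext_tangent_def by simp
  thus ?thesis using empty_not_germ[of Y E x] by simp
qed

lemma diff_plot: "diffeology X D \<Longrightarrow> D n U p \<Longrightarrow> open_dom n U \<and> p ` U \<subseteq> X"
  unfolding diffeology_def by (drule conjunct1) blast

lemma diff_comp: "diffeology X D \<Longrightarrow> D m V p \<Longrightarrow> open_dom n U \<Longrightarrow> smooth_map n m U V f \<Longrightarrow> D n U (p \<circ> f)"
  unfolding diffeology_def by (drule conjunct2, drule conjunct2, drule conjunct2, drule conjunct1) blast

lemma Cinf_smooth: "f \<in> Cinf D B \<Longrightarrow> D n U p \<Longrightarrow> p ` U \<subseteq> B \<Longrightarrow> smooth_fun n U (f \<circ> p)"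
  unfolding Cinf_def smooth_on_def by blast

lemma Cinf_restrict:
  assumes "diffeology X D" "f \<in> Cinf D B" "C \<subseteq> B"
  shows "restrict f C \<in> Cinf D C"
  unfolding Cinf_def smooth_on_def
proof (intro CollectI conjI allI impI)
  show "restrict f C \<in> extensional C" by simp
  fix n U p assume a: "D n U p \<and> p ` U \<subseteq> C"
  hence "smooth_fun n U (f \<circ> p)" using assms(2,3) Cinf_smooth[of f D B n U p] by auto
  moreover have "open_dom n U" using assms(1) a diff_plot by blast
  moreover have "\<forall>u\<in>U. (f \<circ> p) u = (restrict f C \<circ> p) u" using a by auto
  ultimately show "smooth_fun n U (restrict f C \<circ> p)" using smooth_fun_cong[of n U "f \<circ> p"] by blast
qed

lemma Cinf_sub: "B \<subseteq> A \<Longrightarrow> Cinf (sub_diffeology D A) B = Cinf D B"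
  unfolding Cinf_def smooth_on_def sub_diffeology_def by blast

lemma restrict_plot:
  assumes "diffeology X D" "D n U p" "open_dom n W" "W \<subseteq> U"
  shows "D n W p"
proof -
  have "open_dom n U" using assms diff_plot by blast
  hence "U \<subseteq> Eucl n" unfolding open_dom_def by blast
  moreover have "smooth_fun n W (\<lambda>v. id v j)" for j
    unfolding smooth_fun_def using Ck_proj by simp
  ultimately have "smooth_map n n W U id" unfolding smooth_map_def using assms(4) by simp
  hence "D n W (p \<circ> id)" using assms diff_comp by blast
  thus ?thesis by simp
qed

lemma Dopen_sub:
  assumes "diffeology X D" "D_open X D A" "B \<subseteq> A"
  shows "D_open A (sub_diffeology D A) B \<longleftrightarrow> D_open X D B"
proof
  assume b: "D_open A (sub_diffeology D A) B"
  show "D_open X D B" unfolding D_open_def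
  proof (intro conjI allI impI)
    show "B \<subseteq> X" using assms unfolding D_open_def by blast
    fix n U p assume p: "D n U p"
    define W where "W = U \<inter> p -` A"
    have WU: "openin (top_of_set U) W" using assms(2) p unfolding D_open_def W_def by blast
    have "open_dom n U" using assms(1) p diff_plot by blast
    hence "open_dom n W" using WU unfolding open_dom_def
      using openin_trans openin_subset by (metis dual_order.trans topspace_euclidean_subtopology)
    hence "D n W p" using restrict_plot[OF assms(1) p] W_def by blast
    hence "sub_diffeology D A n W p" unfolding sub_diffeology_def W_def by blast
    hence "openin (top_of_set W) (W \<inter> p -` B)" using b unfolding D_open_def by blast
    hence "openin (top_of_set U) (W \<inter> p -` B)" using WU openin_trans by blast
    moreover have "W \<inter> p -` B = U \<inter> p -` B" using assms(3) W_def by blast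
    ultimately show "openin (top_of_set U) (U \<inter> p -` B)" by simp
  qed
next
  assume "D_open X D B"
  thus "D_open A (sub_diffeology D A) B" using assms(3)
    unfolding D_open_def sub_diffeology_def by blast
qed




lemma ext_out: "F \<in> ext_tangent Y E x \<Longrightarrow> \<gamma> \<notin> germs Y E x \<Longrightarrow> F \<gamma> = 0"
proof -
  assume "F \<in> ext_tangent Y E x" "\<gamma> \<notin> germs Y E x"
  moreover have "F \<in> ext_tangent Y E x \<Longrightarrow> \<forall>\<gamma>. \<gamma> \<notin> germs Y E x \<longrightarrow> F \<gamma> = 0" unfolding ext_tangent_def by simp
  ultimately show ?thesis by blast
qed

locale setting =
  fixes X :: "'a set" and D :: "'a plots" and A :: "'a set" and x :: 'a
  assumes diff: "diffeology X D" and xX: "x \<in> X" and Aopen: "D_open X D A" and xA: "x \<in> A"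
begin

abbreviation "DA \<equiv> sub_diffeology D A"
abbreviation "gX \<equiv> germs X D x"
abbreviation "gA \<equiv> germs A DA x"

definition Phi where
  "Phi \<gamma> = (if \<gamma> \<in> gX then (case SOME p. p \<in> \<gamma> of (B, g) \<Rightarrow> germ A DA x (A \<inter> B) g) else {})"

definition Psi where
  "Psi \<gamma> = (if \<gamma> \<in> gA then (case SOME p. p \<in> \<gamma> of (B, g) \<Rightarrow> germ X D x B g) else {})"

lemma AX: "A \<subseteq> X" using Aopen unfolding D_open_def by blast

lemma DopenA_sub: "D_open A DA B \<Longrightarrow> B \<subseteq> A"
  unfolding D_open_def by blast

lemma DopenA_X: "D_open A DA B \<Longrightarrow> D_open X D B"
  using Dopen_sub[OF diff Aopen] DopenA_sub by blast

lemma DopenX_A: "D_open X D B \<Longrightarrow> D_open A DA (A \<inter> B)"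
  using Dopen_sub[OF diff Aopen, of "A \<inter> B"] Dopen_Int[OF Aopen] by blast

lemma P2:
  assumes "germ X D x B h \<in> gX"
  shows "Phi (germ X D x B h) = germ A DA x (A \<inter> B) h"
proof -
  let ?\<gamma> = "germ X D x B h"
  obtain B1 g where s: "(SOME p. p \<in> ?\<gamma>) = (B1, g)" by (cases "SOME p. p \<in> ?\<gamma>") auto
  have "(B1, g) \<in> ?\<gamma>" using germs_some[OF assms] s by simp
  from germ_memD[OF this] obtain C where C: "D_open X D C" "x \<in> C" "C \<subseteq> B \<inter> B1" "\<forall>y\<in>C. h y = g y"
    by blast
  have "Phi ?\<gamma> = germ A DA x (A \<inter> B1) g" using assms s unfolding Phi_def by simp
  also have "\<dots> = germ A DA x (A \<inter> B) h"
    using germ_cong[OF DopenX_A[OF C(1)], of x "A \<inter> B1" "A \<inter> B" g h] C xA by auto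
  finally show ?thesis .
qed

lemma P1:
  assumes "\<gamma> \<in> gX" shows "Phi \<gamma> \<in> gA"
proof -
  from assms obtain B f where B: "\<gamma> = germ X D x B f" "D_open X D B" "x \<in> B" "f \<in> Cinf D B"
    by (rule germs_D)
  have "Phi \<gamma> = germ A DA x (A \<inter> B) f" using P2 assms B(1) by simp
  also have "\<dots> = germ A DA x (A \<inter> B) (restrict f (A \<inter> B))"
    by (rule germ_cong[OF DopenX_A[OF B(2)]]) (use xA B in auto)
  finally have e: "Phi \<gamma> = germ A DA x (A \<inter> B) (restrict f (A \<inter> B))" .
  have "restrict f (A \<inter> B) \<in> Cinf DA (A \<inter> B)"
    using Cinf_restrict[OF diff B(4), of "A \<inter> B"] Cinf_sub[of "A \<inter> B" A D] by auto
  thus ?thesis using e DopenX_A[OF B(2)] xA B(3) unfolding germs_def by blast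
qed

lemma Q2:
  assumes "germ A DA x B h \<in> gA"
  shows "Psi (germ A DA x B h) = germ X D x B h"
proof -
  let ?\<gamma> = "germ A DA x B h"
  obtain B1 g where s: "(SOME p. p \<in> ?\<gamma>) = (B1, g)" by (cases "SOME p. p \<in> ?\<gamma>") auto
  have "(B1, g) \<in> ?\<gamma>" using germs_some[OF assms] s by simp
  from germ_memD[OF this] obtain C where C: "D_open A DA C" "x \<in> C" "C \<subseteq> B \<inter> B1" "\<forall>y\<in>C. h y = g y"
    by blast
  have "Psi ?\<gamma> = germ X D x B1 g" using assms s unfolding Psi_def by simp
  also have "\<dots> = germ X D x B h"
    using germ_cong[OF DopenA_X[OF C(1)], of x B1 B g h] C by auto
  finally show ?thesis .
qed

lemma Q1:
  assumes "\<gamma> \<in> gA" shows "Psi \<gamma> \<in> gX"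
proof -
  from assms obtain B f where B: "\<gamma> = germ A DA x B f" "D_open A DA B" "x \<in> B" "f \<in> Cinf DA B"
    by (rule germs_D)
  have "Psi \<gamma> = germ X D x B f" using Q2 assms B(1) by simp
  moreover have "f \<in> Cinf D B" using B(4) Cinf_sub[OF DopenA_sub[OF B(2)]] by simp
  ultimately show ?thesis using DopenA_X[OF B(2)] B(3) unfolding germs_def by blast
qed

lemma PhiPsi: "\<gamma> \<in> gA \<Longrightarrow> Phi (Psi \<gamma>) = \<gamma>"
proof -
  assume a: "\<gamma> \<in> gA"
  then obtain B f where B: "\<gamma> = germ A DA x B f" "D_open A DA B" "x \<in> B" "f \<in> Cinf DA B"
    by (rule germs_D)
  have "Psi \<gamma> = germ X D x B f" using Q2 a B(1) by simp
  moreover have "Psi \<gamma> \<in> gX" using Q1 a by simp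
  ultimately have "Phi (Psi \<gamma>) = germ A DA x (A \<inter> B) f" using P2 by simp
  moreover have "A \<inter> B = B" using DopenA_sub[OF B(2)] by blast
  ultimately show ?thesis using B(1) by simp
qed

lemma PsiPhi: "\<gamma> \<in> gX \<Longrightarrow> Psi (Phi \<gamma>) = \<gamma>"
proof -
  assume a: "\<gamma> \<in> gX"
  then obtain B f where B: "\<gamma> = germ X D x B f" "D_open X D B" "x \<in> B" "f \<in> Cinf D B"
    by (rule germs_D)
  have "Phi \<gamma> = germ A DA x (A \<inter> B) f" using P2 a B(1) by simp
  moreover have "Phi \<gamma> \<in> gA" using P1 a by simp
  ultimately have "Psi (Phi \<gamma>) = germ X D x (A \<inter> B) f" using Q2 by simp
  also have "\<dots> = germ X D x B f"
    by (rule germ_cong[OF Dopen_Int[OF Aopen B(2)]]) (use xA B in auto)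
  finally show ?thesis using B(1) by simp
qed

lemma Phi_out: "\<gamma> \<notin> gX \<Longrightarrow> Phi \<gamma> = {}" unfolding Phi_def by simp
lemma Psi_out: "\<gamma> \<notin> gA \<Longrightarrow> Psi \<gamma> = {}" unfolding Psi_def by simp

lemma KEY1:
  assumes F: "F \<in> ext_tangent A DA x" and B: "D_open X D B" "x \<in> B"
  shows "F (Phi (germ X D x B h)) = F (germ A DA x (A \<inter> B) h)"
proof (cases "germ X D x B h \<in> gX")
  case True thus ?thesis using P2 by simp
next
  case False
  have "germ A DA x (A \<inter> B) h \<notin> gA"
  proof
    assume a: "germ A DA x (A \<inter> B) h \<in> gA"
    have "germ X D x (A \<inter> B) h \<in> gX" using Q1[OF a] Q2[OF a] by simp
    moreover have "germ X D x (A \<inter> B) h = germ X D x B h"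
      by (rule germ_cong[OF Dopen_Int[OF Aopen B(1)]]) (use xA B in auto)
    ultimately show False using False by simp
  qed
  hence "F (germ A DA x (A \<inter> B) h) = 0" by (rule ext_out[OF F])
  moreover have "F (Phi (germ X D x B h)) = 0" using Phi_out[OF False] ext_empty[OF F] by simp
  ultimately show ?thesis by simp
qed

lemma KEY2:
  assumes G: "G \<in> ext_tangent X D x" and B: "D_open A DA B" "x \<in> B"
  shows "G (Psi (germ A DA x B h)) = G (germ X D x B h)"
proof (cases "germ A DA x B h \<in> gA")
  case True thus ?thesis using Q2 by simp
next
  case False
  have "germ X D x B h \<notin> gX"
  proof
    assume a: "germ X D x B h \<in> gX"
    have "germ A DA x (A \<inter> B) h \<in> gA" using P1[OF a] P2[OF a] by simp
    moreover have "A \<inter> B = B" using DopenA_sub[OF B(1)] by blast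
    ultimately show False using False by simp
  qed
  hence "G (germ X D x B h) = 0" by (rule ext_out[OF G])
  moreover have "G (Psi (germ A DA x B h)) = 0" using Psi_out[OF False] ext_empty[OF G] by simp
  ultimately show ?thesis by simp
qed

end




lemma ext_plot: "F \<in> ext_tangent Y E x \<Longrightarrow> germ_plot Y E x n U P \<Longrightarrow> smooth_fun n U (F \<circ> P)"
proof -
  assume a: "F \<in> ext_tangent Y E x" "germ_plot Y E x n U P"
  have "\<forall>n U P. germ_plot Y E x n U P \<longrightarrow> smooth_fun n U (F \<circ> P)"
    using a(1) unfolding ext_tangent_def by simp
  thus ?thesis using a(2) by simp
qed

lemma ext_alg:
  assumes "F \<in> ext_tangent Y E x" "D_open Y E B" "x \<in> B" "f \<in> Cinf E B" "g \<in> Cinf E B"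
  shows "F (germ Y E x B (\<lambda>y. a * f y + b * g y))
          = a * F (germ Y E x B f) + b * F (germ Y E x B g) \<and>
        F (germ Y E x B (\<lambda>y. f y * g y))
          = F (germ Y E x B f) * g x + f x * F (germ Y E x B g)"
proof -
  have "\<forall>B f g a b. D_open Y E B \<and> x \<in> B \<and> f \<in> Cinf E B \<and> g \<in> Cinf E B \<longrightarrow>
        F (germ Y E x B (\<lambda>y. a * f y + b * g y))
          = a * F (germ Y E x B f) + b * F (germ Y E x B g) \<and>
        F (germ Y E x B (\<lambda>y. f y * g y))
          = F (germ Y E x B f) * g x + f x * F (germ Y E x B g)"
    using assms(1) unfolding ext_tangent_def by simp
  thus ?thesis using assms(2-5) by blast
qed

lemma ext_I:
  assumes "\<And>\<gamma>. \<gamma> \<notin> germs Y E x \<Longrightarrow> F \<gamma> = 0"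
    and "\<And>n U P. germ_plot Y E x n U P \<Longrightarrow> smooth_fun n U (F \<circ> P)"
    and "\<And>B f g a b. D_open Y E B \<Longrightarrow> x \<in> B \<Longrightarrow> f \<in> Cinf E B \<Longrightarrow> g \<in> Cinf E B \<Longrightarrow>
        F (germ Y E x B (\<lambda>y. a * f y + b * g y))
          = a * F (germ Y E x B f) + b * F (germ Y E x B g) \<and>
        F (germ Y E x B (\<lambda>y. f y * g y))
          = F (germ Y E x B f) * g x + f x * F (germ Y E x B g)"
  shows "F \<in> ext_tangent Y E x"
  unfolding ext_tangent_def using assms by simp

context setting begin

lemma GP1:
  assumes P: "germ_plot X D x n U P"
  shows "germ_plot A DA x n U (Phi \<circ> P)"
  unfolding germ_plot_def
proof (intro conjI ballI)
  have P0: "open_dom n U" "P ` U \<subseteq> gX"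
    "\<forall>u\<in>U. \<exists>W B Q. open_dom n W \<and> u \<in> W \<and> W \<subseteq> U \<and> D_open X D B \<and> x \<in> B \<and>
        Cinf_plot D B n W Q \<and> (\<forall>w\<in>W. P w = germ X D x B (Q w))"
    using P unfolding germ_plot_def by simp_all
  show "open_dom n U" by (rule P0(1))
  show "(Phi \<circ> P) ` U \<subseteq> gA" using P0(2) P1 by auto
  fix u assume u: "u \<in> U"
  then obtain W B Q where W: "open_dom n W" "u \<in> W" "W \<subseteq> U" "D_open X D B" "x \<in> B"
    "Cinf_plot D B n W Q" "\<forall>w\<in>W. P w = germ X D x B (Q w)" using P0(3) by blast
  define Q' where "Q' = (\<lambda>w. restrict (Q w) (A \<inter> B))"
  have CP: "open_dom n W" "Q ` W \<subseteq> Cinf D B"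
    "\<forall>m V q r. open_dom m V \<and> smooth_map m n V W q \<and> D m V r \<and> r ` V \<subseteq> B
        \<longrightarrow> smooth_fun m V (\<lambda>v. Q (q v) (r v))"
    using W(6) unfolding Cinf_plot_def by simp_all
  have "Cinf_plot DA (A \<inter> B) n W Q'"
    unfolding Cinf_plot_def
  proof (intro conjI allI impI)
    show "open_dom n W" by (rule CP(1))
    show "Q' ` W \<subseteq> Cinf DA (A \<inter> B)"
    proof
      fix h assume "h \<in> Q' ` W"
      then obtain w where w: "w \<in> W" "h = restrict (Q w) (A \<inter> B)" unfolding Q'_def by blast
      have "Q w \<in> Cinf D B" using CP(2) w(1) by blast
      hence "h \<in> Cinf D (A \<inter> B)" using Cinf_restrict[OF diff, of "Q w" B "A \<inter> B"] w(2) by blast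
      thus "h \<in> Cinf DA (A \<inter> B)" using Cinf_sub[of "A \<inter> B" A D] by simp
    qed
    fix m V q r
    assume a: "open_dom m V \<and> smooth_map m n V W q \<and> DA m V r \<and> r ` V \<subseteq> A \<inter> B"
    hence "D m V r" "r ` V \<subseteq> B" unfolding sub_diffeology_def by auto
    hence "smooth_fun m V (\<lambda>v. Q (q v) (r v))" using CP(3)[rule_format, of m V q r] a by simp
    moreover have "\<forall>v\<in>V. Q (q v) (r v) = Q' (q v) (r v)"
    proof
      fix v assume "v \<in> V"
      hence "r v \<in> A \<inter> B" using a by blast
      thus "Q (q v) (r v) = Q' (q v) (r v)" unfolding Q'_def by simp
    qed
    ultimately show "smooth_fun m V (\<lambda>v. Q' (q v) (r v))"
      using smooth_fun_cong[of m V "\<lambda>v. Q (q v) (r v)" "\<lambda>v. Q' (q v) (r v)"] a by simp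
  qed
  moreover have "\<forall>w\<in>W. (Phi \<circ> P) w = germ A DA x (A \<inter> B) (Q' w)"
  proof
    fix w assume w: "w \<in> W"
    have "P w \<in> gX" using P0(2) W(3) w by blast
    hence "Phi (P w) = germ A DA x (A \<inter> B) (Q w)" using P2 W(7) w by simp
    also have "\<dots> = germ A DA x (A \<inter> B) (Q' w)"
      by (rule germ_cong[OF DopenX_A[OF W(4)]]) (use xA W(5) in \<open>auto simp: Q'_def\<close>)
    finally show "(Phi \<circ> P) w = germ A DA x (A \<inter> B) (Q' w)" by simp
  qed
  ultimately show "\<exists>W B Q. open_dom n W \<and> u \<in> W \<and> W \<subseteq> U \<and> D_open A DA B \<and> x \<in> B \<and>
        Cinf_plot DA B n W Q \<and> (\<forall>w\<in>W. (Phi \<circ> P) w = germ A DA x B (Q w))"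
    using W(1-3,5) DopenX_A[OF W(4)] xA by blast
qed

lemma GP2:
  assumes P: "germ_plot A DA x n U P"
  shows "germ_plot X D x n U (Psi \<circ> P)"
  unfolding germ_plot_def
proof (intro conjI ballI)
  have P0: "open_dom n U" "P ` U \<subseteq> gA"
    "\<forall>u\<in>U. \<exists>W B Q. open_dom n W \<and> u \<in> W \<and> W \<subseteq> U \<and> D_open A DA B \<and> x \<in> B \<and>
        Cinf_plot DA B n W Q \<and> (\<forall>w\<in>W. P w = germ A DA x B (Q w))"
    using P unfolding germ_plot_def by simp_all
  show "open_dom n U" by (rule P0(1))
  show "(Psi \<circ> P) ` U \<subseteq> gX" using P0(2) Q1 by auto
  fix u assume u: "u \<in> U"
  then obtain W B Q where W: "open_dom n W" "u \<in> W" "W \<subseteq> U" "D_open A DA B" "x \<in> B"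
    "Cinf_plot DA B n W Q" "\<forall>w\<in>W. P w = germ A DA x B (Q w)" using P0(3) by blast
  have BA: "B \<subseteq> A" using DopenA_sub[OF W(4)] .
  have CP: "open_dom n W" "Q ` W \<subseteq> Cinf DA B"
    "\<forall>m V q r. open_dom m V \<and> smooth_map m n V W q \<and> DA m V r \<and> r ` V \<subseteq> B
        \<longrightarrow> smooth_fun m V (\<lambda>v. Q (q v) (r v))"
    using W(6) unfolding Cinf_plot_def by simp_all
  have "Cinf_plot D B n W Q"
    unfolding Cinf_plot_def
  proof (intro conjI allI impI)
    show "open_dom n W" by (rule CP(1))
    show "Q ` W \<subseteq> Cinf D B" using CP(2) Cinf_sub[OF BA, of D] by simp
    fix m V q r
    assume a: "open_dom m V \<and> smooth_map m n V W q \<and> D m V r \<and> r ` V \<subseteq> B"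
    hence "DA m V r" using BA unfolding sub_diffeology_def by auto
    thus "smooth_fun m V (\<lambda>v. Q (q v) (r v))" using CP(3)[rule_format, of m V q r] a by simp
  qed
  moreover have "\<forall>w\<in>W. (Psi \<circ> P) w = germ X D x B (Q w)"
  proof
    fix w assume w: "w \<in> W"
    have "P w \<in> gA" using P0(2) W(3) w by blast
    thus "(Psi \<circ> P) w = germ X D x B (Q w)" using Q2 W(7) w by simp
  qed
  ultimately show "\<exists>W B Q. open_dom n W \<and> u \<in> W \<and> W \<subseteq> U \<and> D_open X D B \<and> x \<in> B \<and>
        Cinf_plot D B n W Q \<and> (\<forall>w\<in>W. (Psi \<circ> P) w = germ X D x B (Q w))"
    using W(1-3,5) DopenA_X[OF W(4)] by blast
qed

end



context setting begin

lemma pushfwd_eq: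
  assumes "F {} = 0"
  shows "pushfwd A DA x X D id F = (\<lambda>\<gamma>. F (Phi \<gamma>))"
proof
  fix \<gamma>
  show "pushfwd A DA x X D id F \<gamma> = F (Phi \<gamma>)"
  proof (cases "\<gamma> \<in> gX")
    case True
    obtain B g where s: "(SOME p. p \<in> \<gamma>) = (B, g)" by (cases "SOME p. p \<in> \<gamma>") auto
    show ?thesis using True s unfolding pushfwd_def Phi_def by simp
  next
    case False thus ?thesis using assms unfolding pushfwd_def Phi_def by simp
  qed
qed

lemma GA_cong:
  assumes "D_open X D B" "x \<in> B" "\<forall>y\<in>A \<inter> B. h y = h' y"
  shows "germ A DA x (A \<inter> B) h = germ A DA x (A \<inter> B) h'"
  by (rule germ_cong[OF DopenX_A[OF assms(1)]]) (use assms xA in auto)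

lemma PhiT:
  assumes F: "F \<in> ext_tangent A DA x"
  shows "(\<lambda>\<gamma>. F (Phi \<gamma>)) \<in> ext_tangent X D x"
proof (rule ext_I)
  fix \<gamma> assume "\<gamma> \<notin> gX"
  thus "F (Phi \<gamma>) = 0" using Phi_out ext_empty[OF F] by simp
next
  fix n U P assume "germ_plot X D x n U P"
  hence "smooth_fun n U (F \<circ> (Phi \<circ> P))" using ext_plot[OF F GP1] by blast
  moreover have "F \<circ> (Phi \<circ> P) = (\<lambda>\<gamma>. F (Phi \<gamma>)) \<circ> P" by (simp add: comp_def)
  ultimately show "smooth_fun n U ((\<lambda>\<gamma>. F (Phi \<gamma>)) \<circ> P)" by simp
next
  fix B f g a b
  assume B: "D_open X D B" "x \<in> B" and fg: "f \<in> Cinf D B" "g \<in> Cinf D B"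
  define f' where "f' = restrict f (A \<inter> B)"
  define g' where "g' = restrict g (A \<inter> B)"
  have f': "f' \<in> Cinf DA (A \<inter> B)" "g' \<in> Cinf DA (A \<inter> B)"
    using Cinf_restrict[OF diff fg(1), of "A \<inter> B"] Cinf_restrict[OF diff fg(2), of "A \<inter> B"]
      Cinf_sub[of "A \<inter> B" A D] unfolding f'_def g'_def by auto
  have xAB: "x \<in> A \<inter> B" using xA B by simp
  note alg = ext_alg[OF F DopenX_A[OF B(1)] xAB f', of a b]
  have e1: "germ A DA x (A \<inter> B) (\<lambda>y. a * f y + b * g y) = germ A DA x (A \<inter> B) (\<lambda>y. a * f' y + b * g' y)"
    by (rule GA_cong[OF B]) (simp add: f'_def g'_def)
  have e2: "germ A DA x (A \<inter> B) (\<lambda>y. f y * g y) = germ A DA x (A \<inter> B) (\<lambda>y. f' y * g' y)"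
    by (rule GA_cong[OF B]) (simp add: f'_def g'_def)
  have e3: "germ A DA x (A \<inter> B) f = germ A DA x (A \<inter> B) f'"
    by (rule GA_cong[OF B]) (simp add: f'_def)
  have e4: "germ A DA x (A \<inter> B) g = germ A DA x (A \<inter> B) g'"
    by (rule GA_cong[OF B]) (simp add: g'_def)
  have e5: "f' x = f x" "g' x = g x" using xAB unfolding f'_def g'_def by auto
  show "F (Phi (germ X D x B (\<lambda>y. a * f y + b * g y))) =
        a * F (Phi (germ X D x B f)) + b * F (Phi (germ X D x B g)) \<and>
        F (Phi (germ X D x B (\<lambda>y. f y * g y))) =
        F (Phi (germ X D x B f)) * g x + f x * F (Phi (germ X D x B g))"
    unfolding KEY1[OF F B] e1 e2 e3 e4 using alg e5 by simp
qed

lemma PsiT: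
  assumes G: "G \<in> ext_tangent X D x"
  shows "(\<lambda>\<gamma>. G (Psi \<gamma>)) \<in> ext_tangent A DA x"
proof (rule ext_I)
  fix \<gamma> assume "\<gamma> \<notin> gA"
  thus "G (Psi \<gamma>) = 0" using Psi_out ext_empty[OF G] by simp
next
  fix n U P assume "germ_plot A DA x n U P"
  hence "smooth_fun n U (G \<circ> (Psi \<circ> P))" using ext_plot[OF G GP2] by blast
  moreover have "G \<circ> (Psi \<circ> P) = (\<lambda>\<gamma>. G (Psi \<gamma>)) \<circ> P" by (simp add: comp_def)
  ultimately show "smooth_fun n U ((\<lambda>\<gamma>. G (Psi \<gamma>)) \<circ> P)" by simp
next
  fix B f g a b
  assume B: "D_open A DA B" "x \<in> B" and fg: "f \<in> Cinf DA B" "g \<in> Cinf DA B"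
  have fg': "f \<in> Cinf D B" "g \<in> Cinf D B" using fg Cinf_sub[OF DopenA_sub[OF B(1)], of D] by auto
  note alg = ext_alg[OF G DopenA_X[OF B(1)] B(2) fg', of a b]
  show "G (Psi (germ A DA x B (\<lambda>y. a * f y + b * g y))) =
        a * G (Psi (germ A DA x B f)) + b * G (Psi (germ A DA x B g)) \<and>
        G (Psi (germ A DA x B (\<lambda>y. f y * g y))) =
        G (Psi (germ A DA x B f)) * g x + f x * G (Psi (germ A DA x B g))"
    unfolding KEY2[OF G B] using alg by simp
qed

lemma main:
  "bij_betw (pushfwd A DA x X D id) (ext_tangent A DA x) (ext_tangent X D x)"
  unfolding bij_betw_def
proof
  show "inj_on (pushfwd A DA x X D id) (ext_tangent A DA x)"
  proof (rule inj_onI)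
    fix F F' assume F: "F \<in> ext_tangent A DA x" and F': "F' \<in> ext_tangent A DA x"
      and eq: "pushfwd A DA x X D id F = pushfwd A DA x X D id F'"
    have eq': "(\<lambda>\<gamma>. F (Phi \<gamma>)) = (\<lambda>\<gamma>. F' (Phi \<gamma>))"
      using eq pushfwd_eq[of F, OF ext_empty[OF F]] pushfwd_eq[of F', OF ext_empty[OF F']] by simp
    show "F = F'"
    proof
      fix \<gamma> show "F \<gamma> = F' \<gamma>"
      proof (cases "\<gamma> \<in> gA")
        case True
        have "F (Phi (Psi \<gamma>)) = F' (Phi (Psi \<gamma>))" using eq' by metis
        thus ?thesis using PhiPsi[OF True] by simp
      next
        case False thus ?thesis using ext_out[OF F] ext_out[OF F'] by simp
      qed
    qed
  qed
next
  show "pushfwd A DA x X D id ` ext_tangent A DA x = ext_tangent X D x"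
  proof
    show "pushfwd A DA x X D id ` ext_tangent A DA x \<subseteq> ext_tangent X D x"
    proof
      fix G assume "G \<in> pushfwd A DA x X D id ` ext_tangent A DA x"
      then obtain F where F: "F \<in> ext_tangent A DA x" "G = pushfwd A DA x X D id F" by blast
      thus "G \<in> ext_tangent X D x" using PhiT[OF F(1)] pushfwd_eq[of F, OF ext_empty[OF F(1)]] by simp
    qed
  next
    show "ext_tangent X D x \<subseteq> pushfwd A DA x X D id ` ext_tangent A DA x"
    proof
      fix G assume G: "G \<in> ext_tangent X D x"
      let ?F = "\<lambda>\<gamma>. G (Psi \<gamma>)"
      have F: "?F \<in> ext_tangent A DA x" by (rule PsiT[OF G])
      have "pushfwd A DA x X D id ?F = (\<lambda>\<gamma>. G (Psi (Phi \<gamma>)))"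
        using pushfwd_eq[of ?F, OF ext_empty[OF F]] by simp
      also have "\<dots> = G"
      proof
        fix \<gamma> show "G (Psi (Phi \<gamma>)) = G \<gamma>"
        proof (cases "\<gamma> \<in> gX")
          case True thus ?thesis using PsiPhi by simp
        next
          case False
          have "Psi (Phi \<gamma>) = {}" using Phi_out[OF False] Psi_out[OF empty_not_germ] by simp
          thus ?thesis using ext_empty[OF G] ext_out[OF G False] by simp
        qed
      qed
      finally show "G \<in> pushfwd A DA x X D id ` ext_tangent A DA x"
        using F by (metis image_eqI)
    qed
  qed
qed

end

theorem proposition3p12:
  fixes X :: "'a set" and D :: "'a plots" and A :: "'a set" and x :: 'a
  assumes "diffeology X D" and "x \<in> X" and "D_open X D A" and "x \<in> A"
  shows "bij_betw (pushfwd A (sub_diffeology D A) x X D id)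
           (ext_tangent A (sub_diffeology D A) x) (ext_tangent X D x)
       \<and> (\<forall>F\<in>ext_tangent A (sub_diffeology D A) x. \<forall>F'\<in>ext_tangent A (sub_diffeology D A) x.
            \<forall>a b. pushfwd A (sub_diffeology D A) x X D id (\<lambda>\<gamma>. a * F \<gamma> + b * F' \<gamma>)
              = (\<lambda>\<gamma>. a * pushfwd A (sub_diffeology D A) x X D id F \<gamma>
                      + b * pushfwd A (sub_diffeology D A) x X D id F' \<gamma>))"
proof
  interpret setting X D A x using assms by unfold_locales
  show "bij_betw (pushfwd A (sub_diffeology D A) x X D id)
           (ext_tangent A (sub_diffeology D A) x) (ext_tangent X D x)" by (rule main)
next
  show "\<forall>F\<in>ext_tangent A (sub_diffeology D A) x. \<forall>F'\<in>ext_tangent A (sub_diffeology D A) x.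
            \<forall>a b. pushfwd A (sub_diffeology D A) x X D id (\<lambda>\<gamma>. a * F \<gamma> + b * F' \<gamma>)
              = (\<lambda>\<gamma>. a * pushfwd A (sub_diffeology D A) x X D id F \<gamma>
                      + b * pushfwd A (sub_diffeology D A) x X D id F' \<gamma>)"
    by (simp add: pushfwd_def fun_eq_iff split: prod.split)
qed



end
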